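(* Let $(X_1(t))_{t\ge 0}$ be an arbitrary real-valued stochastic process (no distributional or path assumptions beyond being real-valued), let $u_0\ge 0$, $c_0\ge 0$ and $k>0$. Put $$I_1(t)=-\min\Big(\inf_{0\le s\le t}X_1(s),\,0\Big),\qquad X_0(t)=u_0+c_0t-k\,I_1(t),$$ $$\tau_0=\inf\{t\ge 0: X_0(t)<0\},\qquad X(t)=u_0+c_0t+k\,X_1(t),\qquad \tau=\inf\{t\ge 0: X(t)<0\}.$$ Then $\tau_0=\tau$ pathwise (hence almost surely). In particular, if $X_1(t)=u_1+c_1t-S_1(t)$ for some process $S_1$, then $$\tau_0=\inf\Big\{t\ge 0:\ \tfrac{u_0}{k}+u_1+\big(\tfrac{c_0}{k}+c_1\big)t-S_1(t)<0\Big\},$$ so that for every $t>0$, $\Psi(t,\mathbf u,\mathbf c):=P(\tau_0<t)=\Psi_1\big(t;\,u_0/k+u_1,\,c_0/k+c_1\big)$, where $\Psi_1(t;u,c):=P\big(\inf\{s\ge0: u+cs-S_1(s)<0\}<t\big)$ is the finite-time ruin probability of the subsidiary with initial reserve $u$ and premium rate $c$.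
   Context: Central branch (CB) network with one subsidiary: the subsidiary reserve process $X_1$ is kept nonnegative by minimal (Skorokhod) regulation, the cumulative bail-out amount being the regulator $I_1$; the CB, whose reserve in isolation is the deterministic drift $u_0+c_0t$, pays a proportional cost $k$ per unit of bail-out, so its reserve is $X_0(t)=u_0+c_0t-kI_1(t)$. The ruin time of the network is the ruin time $\tau_0$ of the CB. $X$ is the "pooled assets" process. *)

theory Defs
  imports "HOL-Probability.Probability"
begin

text \<open>Paths are functions of time t (only t \<ge> 0 matters). Infima of possibly
unbounded-below sets are taken in the extended reals, and inf of the empty set is +\<infinity>.\<close>

definition ruin_time :: "(real \<Rightarrow> ereal) \<Rightarrow> ereal" where
  "ruin_time Y = Inf (ereal ` {t. 0 \<le> t \<and> Y t < 0})"

definition bailout :: "(real \<Rightarrow> real) \<Rightarrow> real \<Rightarrow> ereal" where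
  "bailout X1 t = - min (INF s\<in>{0..t}. ereal (X1 s)) 0"

definition cb_reserve :: "real \<Rightarrow> real \<Rightarrow> real \<Rightarrow> (real \<Rightarrow> real) \<Rightarrow> real \<Rightarrow> ereal" where
  "cb_reserve u0 c0 k X1 t = ereal (u0 + c0 * t) - ereal k * bailout X1 t"

definition pooled :: "real \<Rightarrow> real \<Rightarrow> real \<Rightarrow> (real \<Rightarrow> real) \<Rightarrow> real \<Rightarrow> real" where
  "pooled u0 c0 k X1 t = u0 + c0 * t + k * X1 t"

definition subsid_ruin_prob ::
  "'a measure \<Rightarrow> (real \<Rightarrow> 'a \<Rightarrow> real) \<Rightarrow> real \<Rightarrow> real \<Rightarrow> real \<Rightarrow> real" where
  "subsid_ruin_prob M S1 t u c =
     measure M {\<omega> \<in> space M. ruin_time (\<lambda>s. ereal (u + c * s - S1 s \<omega>)) < ereal t}"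

end

theory Submission
  imports Defs
begin

lemma key:
  fixes a k :: real and m :: ereal
  assumes "a \<ge> 0" "k > 0"
  shows "(ereal a - ereal k * (- min m 0) < 0) \<longleftrightarrow> m < ereal (- a / k)"
proof (cases m)
  case (real r)
  then show ?thesis using assms
    by (cases "r \<le> 0") (auto simp: min_def field_simps split: if_splits,
        smt (verit) mult_pos_pos)
qed (use assms in auto)

lemma X0_iff:
  assumes "0 \<le> t" "u0 \<ge> 0" "c0 \<ge> 0" "k > 0"
  shows "cb_reserve u0 c0 k X1 t < 0 \<longleftrightarrow> (\<exists>s\<in>{0..t}. X1 s < - (u0 + c0*t) / k)"
proof -
  have "u0 + c0 * t \<ge> 0" using assms by simp
  then have "cb_reserve u0 c0 k X1 t < 0 \<longleftrightarrow> (INF s\<in>{0..t}. ereal (X1 s)) < ereal (- (u0 + c0*t) / k)"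
    unfolding cb_reserve_def bailout_def using key assms by blast
  also have "\<dots> \<longleftrightarrow> (\<exists>s\<in>{0..t}. X1 s < - (u0 + c0*t) / k)"
    by (simp add: INF_less_iff)
  finally show ?thesis .
qed

lemma part1:
  assumes "u0 \<ge> 0" "c0 \<ge> 0" "k > 0"
  shows "ruin_time (cb_reserve u0 c0 k X1) = ruin_time (\<lambda>t. ereal (pooled u0 c0 k X1 t))"
proof -
  define A0 where "A0 = {t. 0 \<le> t \<and> cb_reserve u0 c0 k X1 t < 0}"
  define A where "A = {t. 0 \<le> t \<and> ereal (pooled u0 c0 k X1 t) < 0}"
  have sub: "A \<subseteq> A0"
  proof
    fix t assume "t \<in> A"
    then have t: "0 \<le> t" "u0 + c0 * t + k * X1 t < 0" by (auto simp: A_def pooled_def)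
    then have "X1 t < - (u0 + c0*t) / k" using assms by (simp add: field_simps)
    then show "t \<in> A0" using X0_iff[OF t(1) assms] t(1) by (auto simp: A0_def)
  qed
  have dom: "\<exists>s\<in>A. s \<le> t" if "t \<in> A0" for t
  proof -
    from that have t: "0 \<le> t" "cb_reserve u0 c0 k X1 t < 0" by (auto simp: A0_def)
    then obtain s where s: "s \<in> {0..t}" "X1 s < - (u0 + c0*t) / k"
      using X0_iff[OF t(1) assms] by auto
    have "k * X1 s < - (u0 + c0*t)" using s(2) assms by (simp add: field_simps)
    moreover have "c0 * s \<le> c0 * t" using s(1) assms by (simp add: mult_left_mono)
    ultimately have "u0 + c0 * s + k * X1 s < 0" by linarith
    then show ?thesis using s(1) by (auto simp: A_def pooled_def)
  qed
  have "Inf (ereal ` A0) = Inf (ereal ` A)"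
  proof (rule antisym)
    show "Inf (ereal ` A0) \<le> Inf (ereal ` A)" using sub by (intro Inf_superset_mono) auto
    show "Inf (ereal ` A) \<le> Inf (ereal ` A0)"
    proof (rule Inf_greatest)
      fix x assume "x \<in> ereal ` A0"
      then obtain t where "t \<in> A0" "x = ereal t" by auto
      then obtain s where "s \<in> A" "s \<le> t" using dom by blast
      then have "Inf (ereal ` A) \<le> ereal s" by (intro Inf_lower) auto
      also have "\<dots> \<le> x" using \<open>s \<le> t\<close> \<open>x = ereal t\<close> by simp
      finally show "Inf (ereal ` A) \<le> x" .
    qed
  qed
  then show ?thesis unfolding ruin_time_def A0_def A_def .
qed

lemma ruin_cong:
  assumes "\<And>t. 0 \<le> t \<Longrightarrow> (Y t < 0) \<longleftrightarrow> (Z t < 0)"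
  shows "ruin_time Y = ruin_time Z"
proof -
  have "{t. 0 \<le> t \<and> Y t < 0} = {t. 0 \<le> t \<and> Z t < 0}" using assms by auto
  then show ?thesis unfolding ruin_time_def by simp
qed

theorem mainTheorem1:
  fixes M :: "'a measure" and X1 :: "real \<Rightarrow> 'a \<Rightarrow> real"
    and u0 c0 k :: real
  assumes "prob_space M" and "u0 \<ge> 0" and "c0 \<ge> 0" and "k > 0"
  shows "(\<forall>\<omega>. ruin_time (cb_reserve u0 c0 k (\<lambda>t. X1 t \<omega>))
              = ruin_time (\<lambda>t. ereal (pooled u0 c0 k (\<lambda>t. X1 t \<omega>) t)))
       \<and> (\<forall>u1 c1 (S1 :: real \<Rightarrow> 'a \<Rightarrow> real).
            (\<forall>t \<omega>. 0 \<le> t \<longrightarrow> X1 t \<omega> = u1 + c1 * t - S1 t \<omega>) \<longrightarrow>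
              (\<forall>\<omega>. ruin_time (cb_reserve u0 c0 k (\<lambda>t. X1 t \<omega>))
                   = ruin_time (\<lambda>t. ereal (u0 / k + u1 + (c0 / k + c1) * t - S1 t \<omega>)))
            \<and> (\<forall>t > 0. measure M {\<omega> \<in> space M.
                   ruin_time (cb_reserve u0 c0 k (\<lambda>t. X1 t \<omega>)) < ereal t}
                 = subsid_ruin_prob M S1 t (u0 / k + u1) (c0 / k + c1)))"
proof -
  have P1: "\<forall>\<omega>. ruin_time (cb_reserve u0 c0 k (\<lambda>t. X1 t \<omega>))
              = ruin_time (\<lambda>t. ereal (pooled u0 c0 k (\<lambda>t. X1 t \<omega>) t))"
    using part1 assms(2-4) by blast
  have P2: "(\<forall>\<omega>. ruin_time (cb_reserve u0 c0 k (\<lambda>t. X1 t \<omega>))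
                   = ruin_time (\<lambda>t. ereal (u0 / k + u1 + (c0 / k + c1) * t - S1 t \<omega>)))
            \<and> (\<forall>t > 0. measure M {\<omega> \<in> space M.
                   ruin_time (cb_reserve u0 c0 k (\<lambda>t. X1 t \<omega>)) < ereal t}
                 = subsid_ruin_prob M S1 t (u0 / k + u1) (c0 / k + c1))"
    if H: "\<forall>t \<omega>. 0 \<le> t \<longrightarrow> X1 t \<omega> = u1 + c1 * t - S1 t \<omega>" for u1 c1 and S1 :: "real \<Rightarrow> 'a \<Rightarrow> real"
  proof -
    have E: "ruin_time (cb_reserve u0 c0 k (\<lambda>t. X1 t \<omega>))
                   = ruin_time (\<lambda>t. ereal (u0 / k + u1 + (c0 / k + c1) * t - S1 t \<omega>))" for \<omega>
    proof -
      have "ruin_time (\<lambda>t. ereal (pooled u0 c0 k (\<lambda>t. X1 t \<omega>) t))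
          = ruin_time (\<lambda>t. ereal (u0 / k + u1 + (c0 / k + c1) * t - S1 t \<omega>))"
      proof (rule ruin_cong)
        fix t :: real assume "0 \<le> t"
        then have "X1 t \<omega> = u1 + c1 * t - S1 t \<omega>" using H by blast
        then have "pooled u0 c0 k (\<lambda>t. X1 t \<omega>) t = k * (u0 / k + u1 + (c0 / k + c1) * t - S1 t \<omega>)"
          using assms(4) by (simp add: pooled_def algebra_simps flip: distrib_left)
        then show "(ereal (pooled u0 c0 k (\<lambda>t. X1 t \<omega>) t) < 0) \<longleftrightarrow>
              (ereal (u0 / k + u1 + (c0 / k + c1) * t - S1 t \<omega>) < 0)"
          using assms(4) by (simp add: mult_less_0_iff)
      qed
      then show ?thesis using P1 by simp
    qed
    then show ?thesis unfolding subsid_ruin_prob_def by simp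
  qed
  show ?thesis using P1 P2 by blast
qed

end
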